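(* Let $A$ be a Banach lattice algebra and let $\{p_\lambda\}_{\lambda\in\Lambda}\subseteq BP_l(A)\cap BP_r(A)$ satisfy $p_\alpha p_\beta=\delta_{\alpha\beta}p_\alpha$ for all $\alpha,\beta\in\Lambda$. If $\Phi\subseteq\Lambda\times\Lambda$ is finite, then for all $x\in A_+$, \[\bigvee_{(\alpha,\beta)\in\Phi}p_\alpha x p_\beta=\sum_{(\alpha,\beta)\in\Phi}p_\alpha x p_\beta .\]
   Context: A Banach lattice algebra is a real Banach lattice $A$ equipped with an associative bilinear product making $(A,\cdot)$ a Banach algebra ($\|xy\|\le\|x\|\|y\|$) such that $xy\ge 0$ whenever $x,y\ge0$. For $a\in A$, $L_a,R_a\colon A\to A$ denote $L_a(x)=ax$, $R_a(x)=xa$. A band projection on a Banach lattice $X$ is an operator $P\colon X\to X$ with $P^2=P$ and $0\le P\le I_X$. $BP_l(A)=\{a\in A_+: L_a \text{ is a band projection}\}$, $BP_r(A)=\{a\in A_+: R_a\text{ is a band projection}\}$. $\delta_{\alpha\beta}$ is the Kronecker delta. *)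

theory Defs
  imports "HOL-Analysis.Analysis"
begin


class banach_lattice_algebra = real_normed_algebra + banach + ordered_real_vector + lattice +
  assumes lattice_norm: "sup x (- x) \<le> sup y (- y) \<Longrightarrow> norm x \<le> norm y"
    and mult_pos: "0 \<le> x \<Longrightarrow> 0 \<le> y \<Longrightarrow> 0 \<le> x * y"

definition band_projection :: "('a::{ordered_real_vector} \<Rightarrow> 'a) \<Rightarrow> bool" where
  "band_projection P \<longleftrightarrow> linear P \<and> P \<circ> P = P \<and> (\<forall>x. 0 \<le> x \<longrightarrow> 0 \<le> P x \<and> P x \<le> x)"

definition BP_l :: "'a::banach_lattice_algebra set" where
  "BP_l = {a. 0 \<le> a \<and> band_projection (\<lambda>x. a * x)}"

definition BP_r :: "'a::banach_lattice_algebra set" where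
  "BP_r = {a. 0 \<le> a \<and> band_projection (\<lambda>x. x * a)}"

end

theory Submission
  imports Defs
begin

lemma sup_eq_add_if_inf0:
  fixes y s :: "'a::banach_lattice_algebra"
  assumes "0 \<le> y" "0 \<le> s" "inf y s = 0"
  shows "sup y s = y + s"
proof (rule antisym)
  show "sup y s \<le> y + s" using assms by (simp add: add_increasing add_increasing2)
  have "y + s - sup y s \<le> y" by (simp add: algebra_simps)
  moreover have "y + s - sup y s \<le> s" by (simp add: algebra_simps)
  ultimately have "y + s - sup y s \<le> inf y s" by simp
  thus "y + s \<le> sup y s" using assms by simp
qed

lemma bp_fix:
  fixes P :: "'a::banach_lattice_algebra \<Rightarrow> 'a"
  assumes bp: "band_projection P" and w: "0 \<le> w" "w \<le> y" and Py: "P y = y"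
  shows "P w = w"
proof -
  have lin: "linear P" and pos: "\<And>v. 0 \<le> v \<Longrightarrow> 0 \<le> P v \<and> P v \<le> v"
    using bp unfolding band_projection_def by auto
  have "0 \<le> y - w" using w by simp
  hence "P (y - w) \<le> y - w" using pos by blast
  hence "y - P w \<le> y - w" using Py linear_diff[OF lin] by simp
  hence "w \<le> P w" by simp
  with pos[OF w(1)] show ?thesis by auto
qed

lemma bp_mono:
  fixes P :: "'a::banach_lattice_algebra \<Rightarrow> 'a"
  assumes bp: "band_projection P" and "u \<le> v"
  shows "P u \<le> P v"
proof -
  have lin: "linear P" and pos: "\<And>v. 0 \<le> v \<Longrightarrow> 0 \<le> P v \<and> P v \<le> v"
    using bp unfolding band_projection_def by auto
  have "0 \<le> P (v - u)" using pos assms(2) by simp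
  thus ?thesis using linear_diff[OF lin] by simp
qed

theorem mainTheorem2:
  fixes p :: "'i \<Rightarrow> 'a::banach_lattice_algebra"
    and \<Phi> :: "('i \<times> 'i) set"
    and x :: 'a
  assumes "\<And>l. p l \<in> BP_l \<inter> BP_r"
    and "\<And>\<alpha> \<beta>. p \<alpha> * p \<beta> = (if \<alpha> = \<beta> then p \<alpha> else 0)"
    and "finite \<Phi>" and "\<Phi> \<noteq> {}"
    and "0 \<le> x"
  shows "Sup_fin ((\<lambda>(\<alpha>, \<beta>). p \<alpha> * x * p \<beta>) ` \<Phi>) = (\<Sum>(\<alpha>, \<beta>)\<in>\<Phi>. p \<alpha> * x * p \<beta>)"
  using assms(3,4)
proof (induction \<Phi> rule: finite_ne_induct)
  case (singleton ab)
  then show ?case by (cases ab) simp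
next
  case (insert ab F)
  obtain a b where ab: "ab = (a, b)" by (cases ab)
  have p0: "\<And>l. 0 \<le> p l" and L: "\<And>l. band_projection (\<lambda>v. p l * v)"
    and R: "\<And>l. band_projection (\<lambda>v. v * p l)"
    using assms(1) unfolding BP_l_def BP_r_def by auto
  define S where "S = (\<Sum>(\<alpha>, \<beta>)\<in>F. p \<alpha> * x * p \<beta>)"
  define y where "y = p a * x * p b"
  have y0: "0 \<le> y" unfolding y_def using p0 assms(5) by (simp add: mult_pos)
  have S0: "0 \<le> S" unfolding S_def
    by (rule sum_nonneg) (auto simp: mult_pos p0 assms(5))
  have pay: "p a * y = y" "y * p b = y" unfolding y_def
    using assms(2)[of a a] assms(2)[of b b] by (simp_all add: mult.assoc[symmetric]) (simp add: mult.assoc)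
  define w where "w = inf y S"
  have w0: "0 \<le> w" unfolding w_def using y0 S0 by simp
  have wy: "w \<le> y" unfolding w_def by simp
  have w1: "p a * w = w" by (rule bp_fix[OF L w0 wy]) (use pay in simp)
  have "w * p b \<le> y * p b" by (rule bp_mono[OF R wy])
  have w2: "w * p b = w" by (rule bp_fix[OF R w0 wy]) (use pay in simp)
  have "p a * w * p b \<le> p a * S * p b"
    using bp_mono[OF R bp_mono[OF L, of w S]] unfolding w_def by simp
  moreover have "p a * S * p b = 0"
    unfolding S_def sum_distrib_left sum_distrib_right
  proof (rule sum.neutral, clarify)
    fix c d assume "(c, d) \<in> F"
    hence "(c, d) \<noteq> (a, b)" using insert ab by auto
    hence "p a * p c = 0 \<or> p d * p b = 0" using assms(2) by auto
    thus "p a * (p c * x * p d) * p b = 0"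
      by (metis mult.assoc mult_zero_left mult_zero_right)
  qed
  ultimately have "w \<le> 0" using w1 w2 by (simp add: mult.assoc)
  hence "inf y S = 0" using w0 unfolding w_def by simp
  hence "sup y S = y + S" using sup_eq_add_if_inf0 y0 S0 by blast
  then show ?case using insert ab unfolding S_def y_def by simp
qed

end
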